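(* Let $(T,\preceq,\Sigma,\mathcal S,\mathcal M)$ be an $(\mathcal S,\mathcal M)$-tree, $n\in\omega$, $f\in\mathcal{AM}$ with domain $T(\le n)$, and $m\in\omega$ such that either $n=0$ and $0\le m\le\tilde f(0)$, or $n>0$ and $\tilde f(n-1)<m\le\tilde f(n)$. Define $f|_m\colon T(\le n)\to T$ by $f|_m(a)=f(a)|_m$ for $a\in T(n)$ and $f|_m(a)=f(a)$ for $a\in T(<n)$. Then $f|_m\in\mathcal{AM}$, and there exists $g\in\mathcal{AM}^m_1$ such that $g\circ f|_m=f$.
   Context: A tree is a partially ordered set $(T,\preceq)$ such that for every $a\in T$ the set $\{b\in T:b\prec a\}$ is finite and linearly ordered by $\preceq$. The level of $a$ is $\ell(a)=|\{b\in T:b\prec a\}|$; $T(n)=\{a\in T:\ell(a)=n\}$, and $T(\le n)$, $T(<n)$ are defined analogously. For $a\in T$ and $n\le \ell(a)$, $a|_n$ denotes the unique predecessor of $a$ at level $n$ (with $a|_{\ell(a)}=a$). A node $b$ is an immediate successor of $a$ if $a\prec b$ and there is no $c$ with $a\prec c\prec b$. An $\mathcal S$-tree is a quadruple $(T,\preceq,\Sigma,\mathcal S)$ where $(T,\preceq)$ is a countable tree in which every node has finitely many immediate successors and $T(0)$ is finite, $\Sigma$ is a set, and $\mathcal S\colon T\times T^{<\omega}\times\Sigma\to T$ is a partial function such that: (S1) if $\mathcal S(a,\bar p,c)$ is defined then it is an immediate successor of $a$ and every entry of $\bar p$ has level at most $\ell(a)-1$; (S2) if $\mathcal S(a,\bar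 p,c)=\mathcal S(b,\bar q,d)$ then $a=b$, $\bar p=\bar q$ and $c=d$; (S3) for every $a\in T$ and every immediate successor $b$ of $a$ there are $\bar p\in T^{<\omega}$ and $c\in\Sigma$ with $b=\mathcal S(a,\bar p,c)$. For $S\subseteq T$, a map $f\colon S\to T$ is level-preserving if $\ell(a)=\ell(b)$ implies $\ell(f(a))=\ell(f(b))$; then $\tilde f(n)$ denotes $\ell(f(a))$ for any $a\in S$ with $\ell(a)=n$. An injection $F\colon T\to T$ is shape-preserving if (i) it is level-preserving; (ii) whenever $\mathcal S(a,\bar p,c)$ is defined, $\mathcal S(F(a),F(\bar p),c)$ is defined and $\mathcal S(F(a),F(\bar p),c)\preceq F(\mathcal S(a,\bar p,c))$, where $F(\bar p)$ is the tuple of images of the entries of $\bar p$; (iii) for every $a\in T(0)$ and $b\in T$ with $a\preceq b$ we have $a\preceq F(b)$. A shape-preserving $F$ skips level $m$ if $m\notin\tilde F[\omega]$, and skips only level $m$ if $\tilde F[\omega]=\omega\setminus\{m\}$. An $(\mathcal S,\mathcal M)$-tree is a quintuple $(T,\preceq,\Sigma,\mathcal S,\mathcal M)$ where $(T,\preceq,\Sigma,\mathcal S)$ is an $\mathcal S$-tree and $\mathcal M$ is a set of shape-preserving functions $T\to T$ such that: (M1) $\mathrm{Id}_T\in\mathcal M$, $\mathcal M$ is closed under composition, and whenever $(F_i)_{i\in\omega}$ is a sequence in $\mathcal M$ with $F_i\restriction T(\le i)=F_{i+1}\restriction T(\le i)$ for all $i$, there is $F_\infty\in\mathcal M$ with $F_\infty\restriction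 T(\le i)=F_i\restriction T(\le i)$ for all $i$; (M2) for every $n\in\omega$ and every $F\in\mathcal M$ with $\tilde F(n)>0$ which skips level $\tilde F(n)-1$, there are $F_1,F_2\in\mathcal M$ such that $F_2$ skips only level $\tilde F(n)-1$ and $(F_2\circ F_1)\restriction T(\le n)=F\restriction T(\le n)$; (M3) for all $n<m$ in $\omega$ there is $F^n_m\in\mathcal M$ skipping only level $m$ such that $F^n_m(b)=\mathcal S(b,\bar p,c)$ whenever $a\in T(n)$, $b\in T(m)$, $\bar p\in T^{<\omega}$, $c\in\Sigma$, $\mathcal S(a,\bar p,c)$ is defined and $\mathcal S(a,\bar p,c)\preceq b$. Notation: $\mathcal M^n=\{F\in\mathcal M: F\restriction T(<n)\text{ is the identity}\}$; $\mathcal{AM}=\{F\restriction T(<k): F\in\mathcal M,\ k>0\}$; $\mathcal{AM}^n_k=\{F\restriction T(<n+k):F\in\mathcal M^n\}$ (so elements of $\mathcal{AM}^m_1$ have domain $T(\le m)$ and are the identity on $T(<m)$). *)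

theory Defs
  imports Main "HOL-Library.FuncSet" "HOL-Library.Countable_Set"
begin

definition strict :: "('a \<Rightarrow> 'a \<Rightarrow> bool) \<Rightarrow> 'a \<Rightarrow> 'a \<Rightarrow> bool" where
  "strict le a b \<longleftrightarrow> le a b \<and> a \<noteq> b"

definition is_tree :: "'a set \<Rightarrow> ('a \<Rightarrow> 'a \<Rightarrow> bool) \<Rightarrow> bool" where
  "is_tree T le \<longleftrightarrow>
     (\<forall>a\<in>T. le a a) \<and>
     (\<forall>a\<in>T. \<forall>b\<in>T. le a b \<and> le b a \<longrightarrow> a = b) \<and>
     (\<forall>a\<in>T. \<forall>b\<in>T. \<forall>c\<in>T. le a b \<and> le b c \<longrightarrow> le a c) \<and>
     (\<forall>a\<in>T. finite {b\<in>T. strict le b a} \<and>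
        (\<forall>b\<in>T. \<forall>c\<in>T. strict le b a \<and> strict le c a \<longrightarrow> le b c \<or> le c b))"

definition lev :: "'a set \<Rightarrow> ('a \<Rightarrow> 'a \<Rightarrow> bool) \<Rightarrow> 'a \<Rightarrow> nat" where
  "lev T le a = card {b\<in>T. strict le b a}"

definition Tlev :: "'a set \<Rightarrow> ('a \<Rightarrow> 'a \<Rightarrow> bool) \<Rightarrow> nat \<Rightarrow> 'a set" where
  "Tlev T le n = {a\<in>T. lev T le a = n}"

definition Tle :: "'a set \<Rightarrow> ('a \<Rightarrow> 'a \<Rightarrow> bool) \<Rightarrow> nat \<Rightarrow> 'a set" where
  "Tle T le n = {a\<in>T. lev T le a \<le> n}"

definition Tlt :: "'a set \<Rightarrow> ('a \<Rightarrow> 'a \<Rightarrow> bool) \<Rightarrow> nat \<Rightarrow> 'a set" where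
  "Tlt T le n = {a\<in>T. lev T le a < n}"

text \<open>a|_m: the unique predecessor of a at level m (for m \<le> level of a).\<close>
definition pred_at :: "'a set \<Rightarrow> ('a \<Rightarrow> 'a \<Rightarrow> bool) \<Rightarrow> 'a \<Rightarrow> nat \<Rightarrow> 'a" where
  "pred_at T le a m = (THE b. b \<in> T \<and> le b a \<and> lev T le b = m)"

definition imm_succ :: "'a set \<Rightarrow> ('a \<Rightarrow> 'a \<Rightarrow> bool) \<Rightarrow> 'a \<Rightarrow> 'a \<Rightarrow> bool" where
  "imm_succ T le a b \<longleftrightarrow> a \<in> T \<and> b \<in> T \<and> strict le a b \<and>
     \<not> (\<exists>c\<in>T. strict le a c \<and> strict le c b)"

text \<open>The partial function S is modelled as a function into option.\<close>
definition is_S_tree :: "'a set \<Rightarrow> ('a \<Rightarrow> 'a \<Rightarrow> bool) \<Rightarrow> 'c set \<Rightarrow>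
    ('a \<Rightarrow> 'a list \<Rightarrow> 'c \<Rightarrow> 'a option) \<Rightarrow> bool" where
  "is_S_tree T le \<Sigma> S \<longleftrightarrow>
     is_tree T le \<and> countable T \<and>
     (\<forall>a\<in>T. finite {b. imm_succ T le a b}) \<and>
     finite (Tlev T le 0) \<and>
     \<comment> \<open>(S1), together with: S is only defined on T \<times> T^{<\<omega>} \<times> \<Sigma>\<close>
     (\<forall>a p c b. S a p c = Some b \<longrightarrow>
        a \<in> T \<and> set p \<subseteq> T \<and> c \<in> \<Sigma> \<and> imm_succ T le a b \<and>
        (\<forall>x\<in>set p. lev T le x + 1 \<le> lev T le a)) \<and>
     \<comment> \<open>(S2)\<close>
     (\<forall>a p c b q d. S a p c \<noteq> None \<and> S a p c = S b q d \<longrightarrow> a = b \<and> p = q \<and> c = d) \<and>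
     \<comment> \<open>(S3)\<close>
     (\<forall>a\<in>T. \<forall>b. imm_succ T le a b \<longrightarrow> (\<exists>p c. set p \<subseteq> T \<and> c \<in> \<Sigma> \<and> S a p c = Some b))"

definition level_preserving :: "'a set \<Rightarrow> ('a \<Rightarrow> 'a \<Rightarrow> bool) \<Rightarrow> 'a set \<Rightarrow> ('a \<Rightarrow> 'a) \<Rightarrow> bool" where
  "level_preserving T le D f \<longleftrightarrow>
     (\<forall>a\<in>D. \<forall>b\<in>D. lev T le a = lev T le b \<longrightarrow> lev T le (f a) = lev T le (f b))"

text \<open>\<open>tilde f n\<close> = level of f(a) for any a at level n.\<close>
definition tilde :: "'a set \<Rightarrow> ('a \<Rightarrow> 'a \<Rightarrow> bool) \<Rightarrow> ('a \<Rightarrow> 'a) \<Rightarrow> nat \<Rightarrow> nat" where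
  "tilde T le f n = lev T le (f (SOME a. a \<in> T \<and> lev T le a = n))"

definition shape_preserving :: "'a set \<Rightarrow> ('a \<Rightarrow> 'a \<Rightarrow> bool) \<Rightarrow>
    ('a \<Rightarrow> 'a list \<Rightarrow> 'c \<Rightarrow> 'a option) \<Rightarrow> ('a \<Rightarrow> 'a) \<Rightarrow> bool" where
  "shape_preserving T le S F \<longleftrightarrow>
     F \<in> extensional T \<and> F ` T \<subseteq> T \<and> inj_on F T \<and>
     level_preserving T le T F \<and>
     (\<forall>a p c b. S a p c = Some b \<longrightarrow>
        (\<exists>b'. S (F a) (map F p) c = Some b' \<and> le b' (F b))) \<and>
     (\<forall>a\<in>Tlev T le 0. \<forall>b\<in>T. le a b \<longrightarrow> le a (F b))"

definition skips :: "'a set \<Rightarrow> ('a \<Rightarrow> 'a \<Rightarrow> bool) \<Rightarrow> ('a \<Rightarrow> 'a) \<Rightarrow> nat \<Rightarrow> bool" where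
  "skips T le F m \<longleftrightarrow> m \<notin> range (tilde T le F)"

definition skips_only :: "'a set \<Rightarrow> ('a \<Rightarrow> 'a \<Rightarrow> bool) \<Rightarrow> ('a \<Rightarrow> 'a) \<Rightarrow> nat \<Rightarrow> bool" where
  "skips_only T le F m \<longleftrightarrow> range (tilde T le F) = UNIV - {m}"

text \<open>Maps T \<rightarrow> T are represented as functions extensional on T;
  composition of F and G is \<open>\<lambda>a\<in>T. F (G a)\<close>.\<close>
definition is_SM_tree :: "'a set \<Rightarrow> ('a \<Rightarrow> 'a \<Rightarrow> bool) \<Rightarrow> 'c set \<Rightarrow>
    ('a \<Rightarrow> 'a list \<Rightarrow> 'c \<Rightarrow> 'a option) \<Rightarrow> ('a \<Rightarrow> 'a) set \<Rightarrow> bool" where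
  "is_SM_tree T le \<Sigma> S M \<longleftrightarrow>
     is_S_tree T le \<Sigma> S \<and>
     (\<forall>F\<in>M. shape_preserving T le S F) \<and>
     \<comment> \<open>(M1)\<close>
     (\<lambda>a\<in>T. a) \<in> M \<and>
     (\<forall>F\<in>M. \<forall>G\<in>M. (\<lambda>a\<in>T. F (G a)) \<in> M) \<and>
     (\<forall>Fs. (\<forall>i. Fs i \<in> M) \<and> (\<forall>i. \<forall>a\<in>Tle T le i. Fs i a = Fs (Suc i) a) \<longrightarrow>
        (\<exists>F\<in>M. \<forall>i. \<forall>a\<in>Tle T le i. F a = Fs i a)) \<and>
     \<comment> \<open>(M2)\<close>
     (\<forall>n. \<forall>F\<in>M. tilde T le F n > 0 \<and> skips T le F (tilde T le F n - 1) \<longrightarrow>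
        (\<exists>F1\<in>M. \<exists>F2\<in>M. skips_only T le F2 (tilde T le F n - 1) \<and>
           (\<forall>a\<in>Tle T le n. F2 (F1 a) = F a))) \<and>
     \<comment> \<open>(M3)\<close>
     (\<forall>n m. n < m \<longrightarrow>
        (\<exists>F\<in>M. skips_only T le F m \<and>
           (\<forall>a\<in>Tlev T le n. \<forall>b\<in>Tlev T le m. \<forall>p c x.
              S a p c = Some x \<and> le x b \<longrightarrow> S b p c = Some (F b))))"

definition Mn :: "'a set \<Rightarrow> ('a \<Rightarrow> 'a \<Rightarrow> bool) \<Rightarrow> ('a \<Rightarrow> 'a) set \<Rightarrow> nat \<Rightarrow> ('a \<Rightarrow> 'a) set" where
  "Mn T le M n = {F\<in>M. \<forall>a\<in>Tlt T le n. F a = a}"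

definition AM_on :: "('a \<Rightarrow> 'a) set \<Rightarrow> 'a set \<Rightarrow> ('a \<Rightarrow> 'a) set" where
  "AM_on M D = {restrict F D | F. F \<in> M}"

definition AM :: "'a set \<Rightarrow> ('a \<Rightarrow> 'a \<Rightarrow> bool) \<Rightarrow> ('a \<Rightarrow> 'a) set \<Rightarrow> ('a \<Rightarrow> 'a) set" where
  "AM T le M = {restrict F (Tlt T le k) | F k. F \<in> M \<and> k > 0}"

definition AMnk :: "'a set \<Rightarrow> ('a \<Rightarrow> 'a \<Rightarrow> bool) \<Rightarrow> ('a \<Rightarrow> 'a) set \<Rightarrow> nat \<Rightarrow> nat \<Rightarrow> ('a \<Rightarrow> 'a) set" where
  "AMnk T le M n k = {restrict F (Tlt T le (n + k)) | F. F \<in> Mn T le M n}"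

definition cut_at :: "'a set \<Rightarrow> ('a \<Rightarrow> 'a \<Rightarrow> bool) \<Rightarrow> nat \<Rightarrow> ('a \<Rightarrow> 'a) \<Rightarrow> nat \<Rightarrow> 'a \<Rightarrow> 'a" where
  "cut_at T le n f m = (\<lambda>a\<in>Tle T le n.
     if lev T le a = n then pred_at T le (f a) m else f a)"

end

theory Submission imports Defs begin

context fixes T :: "'a set" and le :: "'a \<Rightarrow> 'a \<Rightarrow> bool"
  assumes tr: "is_tree T le"
begin

lemma tr_refl: "a \<in> T \<Longrightarrow> le a a" using tr unfolding is_tree_def by blast
lemma tr_antisym: "a \<in> T \<Longrightarrow> b \<in> T \<Longrightarrow> le a b \<Longrightarrow> le b a \<Longrightarrow> a = b"
  using tr unfolding is_tree_def by blast
lemma tr_trans: "a \<in> T \<Longrightarrow> b \<in> T \<Longrightarrow> c \<in> T \<Longrightarrow> le a b \<Longrightarrow> le b c \<Longrightarrow> le a c"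
  using tr unfolding is_tree_def by blast
lemma tr_fin: "a \<in> T \<Longrightarrow> finite {b\<in>T. strict le b a}"
  using tr unfolding is_tree_def by blast
lemma tr_chain: "a \<in> T \<Longrightarrow> b \<in> T \<Longrightarrow> c \<in> T \<Longrightarrow> strict le b a \<Longrightarrow> strict le c a \<Longrightarrow> le b c \<or> le c b"
  using tr unfolding is_tree_def by blast

lemma T1: assumes "a \<in> T" "b \<in> T" "strict le b a" shows "lev T le b < lev T le a"
proof -
  have sub: "{c\<in>T. strict le c b} \<subset> {c\<in>T. strict le c a}"
  proof
    show "{c\<in>T. strict le c b} \<subseteq> {c\<in>T. strict le c a}"
    proof
      fix c assume "c \<in> {c\<in>T. strict le c b}"
      hence c: "c \<in> T" "le c b" "c \<noteq> b" by (auto simp: strict_def)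
      have "le c a" using tr_trans[OF c(1) assms(2) assms(1) c(2)] assms(3) by (simp add: strict_def)
      moreover have "c \<noteq> a"
      proof
        assume "c = a"
        hence "b = a" using tr_antisym[OF assms(2,1)] c(2) assms(3) by (simp add: strict_def)
        thus False using assms(3) by (simp add: strict_def)
      qed
      ultimately show "c \<in> {c\<in>T. strict le c a}" using c by (simp add: strict_def)
    qed
    show "{c\<in>T. strict le c b} \<noteq> {c\<in>T. strict le c a}"
      using assms by (auto simp: strict_def)
  qed
  show ?thesis unfolding lev_def by (rule psubset_card_mono[OF tr_fin[OF assms(1)] sub])
qed

lemma T2: assumes "a \<in> T" "j \<le> lev T le a" shows "\<exists>b\<in>T. le b a \<and> lev T le b = j"
proof (cases "j = lev T le a")
  case True thus ?thesis using assms tr_refl by blast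
next
  case False
  define P where "P = {c\<in>T. strict le c a}"
  have fP: "finite P" using tr_fin[OF assms(1)] P_def by simp
  have cP: "card P = lev T le a" by (simp add: P_def lev_def)
  have inj: "inj_on (lev T le) P"
  proof (rule inj_onI)
    fix x y assume xy: "x \<in> P" "y \<in> P" "lev T le x = lev T le y"
    show "x = y"
    proof (rule ccontr)
      assume ne: "x \<noteq> y"
      have "le x y \<or> le y x" using xy tr_chain[OF assms(1)] by (auto simp: P_def)
      thus False using T1 xy ne unfolding P_def strict_def by (metis (no_types, lifting) less_irrefl mem_Collect_eq)
    qed
  qed
  have sub: "lev T le ` P \<subseteq> {..<card P}" using T1[OF assms(1)] cP by (auto simp: P_def)
  have "card (lev T le ` P) = card {..<card P}" using card_image[OF inj] by simp
  hence eq: "lev T le ` P = {..<card P}" using card_subset_eq[OF _ sub] by simp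
  have "j \<in> {..<card P}" using False assms(2) cP by simp
  then obtain b where "b \<in> P" "lev T le b = j" using eq by (metis imageE)
  thus ?thesis by (auto simp: P_def strict_def)
qed

lemma T3: assumes "a \<in> T" "b \<in> T" "b' \<in> T" "le b a" "le b' a" "lev T le b = lev T le b'"
  shows "b = b'"
proof (rule ccontr)
  assume ne: "b \<noteq> b'"
  show False
  proof (cases "b = a \<or> b' = a")
    case True
    thus False using T1 assms ne unfolding strict_def by (metis less_irrefl)
  next
    case False
    hence "le b b' \<or> le b' b" using tr_chain[OF assms(1,2,3)] assms by (simp add: strict_def)
    thus False using T1 assms ne unfolding strict_def by (metis less_irrefl)
  qed
qed

lemma pred_at_prop: assumes "a \<in> T" "j \<le> lev T le a"
  shows "pred_at T le a j \<in> T \<and> le (pred_at T le a j) a \<and> lev T le (pred_at T le a j) = j"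
proof -
  obtain b where b: "b\<in>T" "le b a" "lev T le b = j" using T2[OF assms] by blast
  have "\<exists>!b. b \<in> T \<and> le b a \<and> lev T le b = j"
    using b T3[OF assms(1)] by metis
  thus ?thesis unfolding pred_at_def by (rule theI')
qed

lemma pred_at_eq: assumes "a \<in> T" "z \<in> T" "le z a" "lev T le z = j"
  shows "pred_at T le a j = z"
  unfolding pred_at_def
  by (rule the_equality) (use assms T3[OF assms(1)] in metis)+

lemma T5: assumes "b \<in> T" "lev T le b = Suc j" shows "\<exists>a\<in>T. imm_succ T le a b \<and> lev T le a = j"
proof -
  obtain a where a: "a \<in> T" "le a b" "lev T le a = j" using T2[OF assms(1), of j] assms(2) by auto
  have "a \<noteq> b" using a assms by auto
  moreover have "\<not> (\<exists>c\<in>T. strict le a c \<and> strict le c b)"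
  proof
    assume "\<exists>c\<in>T. strict le a c \<and> strict le c b"
    then obtain c where "c \<in> T" "strict le a c" "strict le c b" by blast
    thus False using T1[OF \<open>c\<in>T\<close> a(1)] T1[OF assms(1) \<open>c\<in>T\<close>] a assms by simp
  qed
  ultimately show ?thesis using a assms unfolding imm_succ_def strict_def by blast
qed

end

lemma sp_ext: "shape_preserving T le S F \<Longrightarrow> F \<in> extensional T" unfolding shape_preserving_def by (elim conjE)
lemma sp_into: "shape_preserving T le S F \<Longrightarrow> x \<in> T \<Longrightarrow> F x \<in> T" unfolding shape_preserving_def by (elim conjE) blast
lemma sp_lp: "shape_preserving T le S F \<Longrightarrow> level_preserving T le T F" unfolding shape_preserving_def by (elim conjE)
lemma sp_S: "shape_preserving T le S F \<Longrightarrow> S a p c = Some b \<Longrightarrow> \<exists>b'. S (F a) (map F p) c = Some b' \<and> le b' (F b)"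
  unfolding shape_preserving_def by (elim conjE) blast
lemma sp_root: "shape_preserving T le S F \<Longrightarrow> a \<in> Tlev T le 0 \<Longrightarrow> b \<in> T \<Longrightarrow> le a b \<Longrightarrow> le a (F b)"
  unfolding shape_preserving_def by (elim conjE) blast


lemma skip_only_id: assumes sm: "strict_mono (t::nat\<Rightarrow>nat)" and r: "range t = UNIV - {c}"
  shows "i < c \<Longrightarrow> t i = i"
proof (induction i rule: less_induct)
  case (less i)
  have "i \<in> range t" using r less.prems by auto
  then obtain l where l: "t l = i" by auto
  have "l \<le> i" using strict_mono_imp_increasing[OF sm, of l] l by simp
  moreover have "\<not> l < i"
  proof
    assume "l < i" hence "t l = l" using less.IH less.prems by simp
    thus False using l \<open>l < i\<close> by simp
  qed
  ultimately have "l = i" by simp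
  thus ?case using l by simp
qed

lemma skip_gt: assumes sm: "strict_mono (t::nat\<Rightarrow>nat)" and r: "c \<notin> range t" shows "c < t c"
proof -
  have "c \<le> t c" using strict_mono_imp_increasing[OF sm] by simp
  moreover have "t c \<noteq> c" using r by (metis rangeI)
  ultimately show ?thesis by simp
qed

context fixes T :: "'a set" and le :: "'a \<Rightarrow> 'a \<Rightarrow> bool" and \<Sigma> :: "'c set"
    and S :: "'a \<Rightarrow> 'a list \<Rightarrow> 'c \<Rightarrow> 'a option" and M :: "('a \<Rightarrow> 'a) set"
  assumes SM: "is_SM_tree T le \<Sigma> S M"
begin

lemma St: "is_S_tree T le \<Sigma> S" using SM unfolding is_SM_tree_def by (elim conjE)
lemma trS: "is_tree T le" using St unfolding is_S_tree_def by (elim conjE)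
lemma S1all: "\<forall>a p c b. S a p c = Some b \<longrightarrow>
        a \<in> T \<and> set p \<subseteq> T \<and> c \<in> \<Sigma> \<and> imm_succ T le a b \<and>
        (\<forall>x\<in>set p. lev T le x + 1 \<le> lev T le a)"
  using St unfolding is_S_tree_def by (elim conjE)
lemma S1: "S a p c = Some b \<Longrightarrow> a \<in> T \<and> set p \<subseteq> T \<and> imm_succ T le a b \<and>
        (\<forall>x\<in>set p. lev T le x + 1 \<le> lev T le a)"
  using S1all by blast
lemma S3all: "\<forall>a\<in>T. \<forall>b. imm_succ T le a b \<longrightarrow> (\<exists>p c. set p \<subseteq> T \<and> c \<in> \<Sigma> \<and> S a p c = Some b)"
  using St unfolding is_S_tree_def by (elim conjE)
lemma S3: "a \<in> T \<Longrightarrow> imm_succ T le a b \<Longrightarrow> \<exists>p c. set p \<subseteq> T \<and> S a p c = Some b"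
  using S3all by blast
lemma spall: "\<forall>F\<in>M. shape_preserving T le S F" using SM unfolding is_SM_tree_def by (elim conjE)
lemma spM: "F \<in> M \<Longrightarrow> shape_preserving T le S F" using spall by blast
lemma idM: "(\<lambda>a\<in>T. a) \<in> M" using SM unfolding is_SM_tree_def by (elim conjE)
lemma compall: "\<forall>F\<in>M. \<forall>G\<in>M. (\<lambda>a\<in>T. F (G a)) \<in> M" using SM unfolding is_SM_tree_def by (elim conjE)
lemma compM: "F \<in> M \<Longrightarrow> G \<in> M \<Longrightarrow> (\<lambda>a\<in>T. F (G a)) \<in> M" using compall by blast
lemma M2all: "\<forall>n. \<forall>F\<in>M. tilde T le F n > 0 \<and> skips T le F (tilde T le F n - 1) \<longrightarrow>
        (\<exists>F1\<in>M. \<exists>F2\<in>M. skips_only T le F2 (tilde T le F n - 1) \<and>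
           (\<forall>a\<in>Tle T le n. F2 (F1 a) = F a))" using SM unfolding is_SM_tree_def by (elim conjE)


lemma P1: assumes sp: "shape_preserving T le S F" and im: "imm_succ T le a b"
  shows "lev T le (F a) < lev T le (F b)"
proof -
  have ab: "a \<in> T" "b \<in> T" using im by (auto simp: imm_succ_def)
  obtain p c where pc: "S a p c = Some b" using S3[OF ab(1) im] by blast
  obtain b' where b': "S (F a) (map F p) c = Some b'" "le b' (F b)"
    using sp_S[OF sp pc] by blast
  have i2: "imm_succ T le (F a) b'" using S1[OF b'(1)] by blast
  have FT: "F a \<in> T" "F b \<in> T" "b' \<in> T" using sp_into[OF sp] ab i2 unfolding imm_succ_def by auto
  have s: "le (F a) b'" "F a \<noteq> b'" using i2 by (auto simp: imm_succ_def strict_def)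
  have "le (F a) (F b)" using tr_trans[OF trS FT(1,3,2) s(1) b'(2)] .
  moreover have "F a \<noteq> F b"
  proof
    assume "F a = F b"
    thus False using tr_antisym[OF trS FT(1,3) s(1)] b'(2) s(2) by simp
  qed
  ultimately show ?thesis using T1[OF trS FT(2,1)] by (simp add: strict_def)
qed

lemma levF: assumes sp: "shape_preserving T le S F" and x: "x \<in> T"
  shows "lev T le (F x) = tilde T le F (lev T le x)"
proof -
  let ?y = "SOME a. a \<in> T \<and> lev T le a = lev T le x"
  have y: "?y \<in> T \<and> lev T le ?y = lev T le x" by (rule someI[of _ x]) (use x in simp)
  have "level_preserving T le T F" using sp_lp[OF sp] .
  hence "lev T le (F x) = lev T le (F ?y)" using y x unfolding level_preserving_def by metis
  thus ?thesis unfolding tilde_def .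
qed

lemma all_levels: "\<exists>a\<in>T. lev T le a = j"
proof (rule ccontr)
  assume no: "\<not> (\<exists>a\<in>T. lev T le a = j)"
  have small: "\<forall>x\<in>T. lev T le x < j"
  proof
    fix x assume x: "x \<in> T"
    show "lev T le x < j"
    proof (rule ccontr)
      assume "\<not> lev T le x < j"
      then obtain b where "b\<in>T" "lev T le b = j" using T2[OF trS x, of j] by auto
      thus False using no by blast
    qed
  qed
  have M3: "\<forall>n m. n < m \<longrightarrow>
        (\<exists>F\<in>M. skips_only T le F m \<and>
           (\<forall>a\<in>Tlev T le n. \<forall>b\<in>Tlev T le m. \<forall>p c x.
              S a p c = Some x \<and> le x b \<longrightarrow> S b p c = Some (F b)))"
    using SM unfolding is_SM_tree_def by (elim conjE) assumption
  obtain F where F: "F \<in> M" "skips_only T le F 1"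
    using M3[rule_format, of 0 1] by auto
  have sp: "shape_preserving T le S F" using spM F(1) .
  have "range (tilde T le F) \<subseteq> {..<j} \<union> {lev T le (undefined::'a)}"
  proof
    fix v assume "v \<in> range (tilde T le F)"
    then obtain i where v: "v = lev T le (F (SOME a. a \<in> T \<and> lev T le a = i))"
      unfolding tilde_def by blast
    let ?y = "SOME a. a \<in> T \<and> lev T le a = i"
    show "v \<in> {..<j} \<union> {lev T le (undefined::'a)}"
    proof (cases "?y \<in> T")
      case True
      hence "F ?y \<in> T" using sp_into[OF sp] by blast
      thus ?thesis using small v by auto
    next
      case False
      hence "F ?y = undefined" using sp_ext[OF sp] unfolding extensional_def by blast
      thus ?thesis using v by simp
    qed
  qed
  hence "finite (range (tilde T le F))" by (rule finite_subset) simp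
  moreover have "range (tilde T le F) = UNIV - {1}" using F(2) unfolding skips_only_def .
  ultimately have "finite (UNIV - {1::nat})" by simp
  thus False by simp
qed

lemma tmono: assumes sp: "shape_preserving T le S F" shows "strict_mono (tilde T le F)"
  unfolding strict_mono_Suc_iff
proof
  fix j
  obtain b where b: "b \<in> T" "lev T le b = Suc j" using all_levels by blast
  obtain a where a: "a \<in> T" "imm_succ T le a b" "lev T le a = j" using T5[OF trS b] by blast
  show "tilde T le F j < tilde T le F (Suc j)"
    using P1[OF sp a(2)] levF[OF sp a(1)] levF[OF sp b(1)] a(3) b(2) by simp
qed

lemma IDp: assumes sp: "shape_preserving T le S F" and id: "\<forall>x\<in>Tlt T le j. F x = x"
  and y: "y \<in> T" "lev T le y = j" shows "le y (F y)"
proof (cases j)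
  case 0
  thus ?thesis using sp_root[OF sp _ y(1) tr_refl[OF trS y(1)]] y by (simp add: Tlev_def)
next
  case (Suc i)
  obtain a where a: "a \<in> T" "imm_succ T le a y" "lev T le a = i" using T5[OF trS y(1)] y(2) Suc by blast
  obtain p c where pc: "set p \<subseteq> T" "S a p c = Some y" using S3[OF a(1,2)] by blast
  obtain b' where b': "S (F a) (map F p) c = Some b'" "le b' (F y)"
    using sp_S[OF sp pc(2)] by blast
  have "F a = a" using id a Suc y by (auto simp: Tlt_def)
  moreover have "map F p = p"
  proof (rule map_idI)
    fix x assume "x \<in> set p"
    hence "x \<in> T" "lev T le x + 1 \<le> lev T le a" using pc S1[OF pc(2)] by auto
    thus "F x = x" using id a(3) Suc y by (auto simp: Tlt_def)
  qed
  ultimately have "b' = y" using b'(1) pc(2) by simp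
  thus ?thesis using b'(2) by simp
qed

lemma ID: assumes sp: "shape_preserving T le S F" and t: "\<forall>i<j. tilde T le F i = i"
  shows "\<forall>x\<in>Tlt T le j. F x = x"
  using t
proof (induction j)
  case 0 thus ?case by (simp add: Tlt_def)
next
  case (Suc j)
  have ih: "\<forall>x\<in>Tlt T le j. F x = x" using Suc by simp
  show ?case
  proof
    fix x assume x: "x \<in> Tlt T le (Suc j)"
    show "F x = x"
    proof (cases "lev T le x < j")
      case True thus ?thesis using ih x by (simp add: Tlt_def)
    next
      case False
      hence lx: "lev T le x = j" "x \<in> T" using x by (auto simp: Tlt_def)
      have l1: "le x (F x)" using IDp[OF sp ih lx(2,1)] .
      have FT: "F x \<in> T" using sp_into[OF sp] lx by blast
      have "lev T le (F x) = j" using levF[OF sp lx(2)] lx Suc.prems by simp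
      thus ?thesis using T3[OF trS FT lx(2) FT l1 tr_refl[OF trS FT]] lx by simp
    qed
  qed
qed


lemma main_ind:
  "\<forall>F\<in>M. tilde T le F n - m = d \<longrightarrow> m \<le> tilde T le F n \<longrightarrow> (n = 0 \<or> tilde T le F (n - 1) < m) \<longrightarrow>
   (\<exists>G\<in>M. (\<forall>a\<in>Tlt T le n. G a = F a) \<and> (\<forall>a\<in>Tlev T le n. G a = pred_at T le (F a) m) \<and>
      (\<exists>g\<in>Mn T le M m. \<forall>a\<in>Tle T le n. g (G a) = F a))"
proof (induction d)
  case 0
  show ?case
  proof (intro ballI impI)
    fix F assume F: "F \<in> M" "tilde T le F n - m = 0" "m \<le> tilde T le F n"
    have sp: "shape_preserving T le S F" using spM F(1) .
    have mk: "m = tilde T le F n" using F by simp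
    have "\<forall>a\<in>Tlev T le n. F a = pred_at T le (F a) m"
    proof
      fix a assume a: "a \<in> Tlev T le n"
      hence aT: "a \<in> T" and la: "lev T le a = n" by (auto simp: Tlev_def)
      have FT: "F a \<in> T" using sp_into[OF sp aT] .
      have "lev T le (F a) = m" using levF[OF sp aT] la mk by simp
      thus "F a = pred_at T le (F a) m" using pred_at_eq[OF trS FT FT tr_refl[OF trS FT]] by simp
    qed
    moreover have "(\<lambda>a\<in>T. a) \<in> Mn T le M m" using idM by (auto simp: Mn_def Tlt_def)
    moreover have "\<forall>a\<in>Tle T le n. (\<lambda>a\<in>T. a) (F a) = F a"
      using sp_into[OF sp] by (auto simp: Tle_def)
    ultimately show "\<exists>G\<in>M. (\<forall>a\<in>Tlt T le n. G a = F a) \<and> (\<forall>a\<in>Tlev T le n. G a = pred_at T le (F a) m) \<and>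
      (\<exists>g\<in>Mn T le M m. \<forall>a\<in>Tle T le n. g (G a) = F a)" using F(1) by metis
  qed
next
  case (Suc d)
  show ?case
  proof (intro ballI impI)
    fix F assume F: "F \<in> M" "tilde T le F n - m = Suc d" "m \<le> tilde T le F n"
      and nm: "n = 0 \<or> tilde T le F (n - 1) < m"
    have sp: "shape_preserving T le S F" using spM F(1) .
    define k where "k = tilde T le F n"
    have mk: "m < k" "d = k - 1 - m" using F k_def by auto
    have smF: "strict_mono (tilde T le F)" using tmono[OF sp] .
    have lowF: "tilde T le F j < m" if "j < n" for j
    proof -
      have "n \<noteq> 0" using that by simp
      hence "tilde T le F (n - 1) < m" using nm by simp
      moreover have "tilde T le F j \<le> tilde T le F (n - 1)"
        using smF that by (simp add: strict_mono_less_eq)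
      ultimately show ?thesis by simp
    qed
    have skF: "skips T le F (k - 1)"
      unfolding skips_def
    proof
      assume "k - 1 \<in> range (tilde T le F)"
      then obtain j where j: "tilde T le F j = k - 1" by auto
      show False
      proof (cases "j < n")
        case True thus False using lowF[OF True] j mk by simp
      next
        case False
        hence "tilde T le F n \<le> tilde T le F j" using smF by (simp add: strict_mono_less_eq)
        thus False using j k_def mk by simp
      qed
    qed
    have "0 < tilde T le F n" using mk k_def by simp
    then obtain F1 F2 where F12: "F1 \<in> M" "F2 \<in> M" "skips_only T le F2 (k - 1)"
       "\<forall>a\<in>Tle T le n. F2 (F1 a) = F a"
      using M2all F(1) skF k_def by blast
    have sp1: "shape_preserving T le S F1" using spM F12(1) .
    have sp2: "shape_preserving T le S F2" using spM F12(2) .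
    have sm2: "strict_mono (tilde T le F2)" using tmono[OF sp2] .
    have r2: "range (tilde T le F2) = UNIV - {k - 1}" using F12(3) unfolding skips_only_def .
    have t2id: "\<forall>i<k - 1. tilde T le F2 i = i" using skip_only_id[OF sm2 r2] by blast
    have F2id: "\<forall>x\<in>Tlt T le (k - 1). F2 x = x" using ID[OF sp2 t2id] .
    have t2k: "k \<le> tilde T le F2 (k - 1)" using skip_gt[OF sm2, of "k - 1"] r2 mk by auto
    have t2hi: "k \<le> tilde T le F2 j" if "k - 1 \<le> j" for j
      using t2k sm2 that by (meson order_trans strict_mono_less_eq)
    have t2hi2: "k < tilde T le F2 j" if "k \<le> j" for j
    proof -
      have "tilde T le F2 (k - 1) < tilde T le F2 j" using sm2 that mk by (simp add: strict_mono_less)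
      thus ?thesis using t2k by simp
    qed
    have F1low: "F1 a = F a \<and> lev T le (F1 a) < k - 1" if a: "a \<in> T" "lev T le a < n" for a
    proof -
      have aTle: "a \<in> Tle T le n" using a by (simp add: Tle_def)
      have lFa: "lev T le (F a) < m" using levF[OF sp a(1)] lowF[OF a(2)] by simp
      have F1T: "F1 a \<in> T" using sp_into[OF sp1 a(1)] .
      have l1: "lev T le (F1 a) < k - 1"
      proof (rule ccontr)
        assume "\<not> lev T le (F1 a) < k - 1"
        hence "k \<le> lev T le (F2 (F1 a))" using levF[OF sp2 F1T] t2hi by simp
        thus False using F12(4) aTle lFa mk by simp
      qed
      hence "F2 (F1 a) = F1 a" using F2id F1T by (simp add: Tlt_def)
      thus ?thesis using F12(4) aTle l1 by simp
    qed
    have F1n: "lev T le (F1 a) = k - 1" if a: "a \<in> T" "lev T le a = n" for a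
    proof -
      have aTle: "a \<in> Tle T le n" using a by (simp add: Tle_def)
      have lFa: "lev T le (F a) = k" using levF[OF sp a(1)] a(2) k_def by simp
      have F1T: "F1 a \<in> T" using sp_into[OF sp1 a(1)] .
      have eq: "lev T le (F2 (F1 a)) = k" using F12(4) aTle lFa by simp
      show ?thesis
      proof (rule ccontr)
        assume ne: "lev T le (F1 a) \<noteq> k - 1"
        show False
        proof (cases "lev T le (F1 a) < k - 1")
          case True
          hence "F2 (F1 a) = F1 a" using F2id F1T by (simp add: Tlt_def)
          thus False using eq True by simp
        next
          case False
          hence "k \<le> lev T le (F1 a)" using ne by simp
          hence "k < lev T le (F2 (F1 a))" using levF[OF sp2 F1T] t2hi2 by simp
          thus False using eq by simp
        qed
      qed
    qed
    obtain an where an: "an \<in> T" "lev T le an = n" using all_levels by blast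
    have t1n: "tilde T le F1 n = k - 1" using F1n[OF an] levF[OF sp1 an(1)] an(2) by simp
    have nm1: "n = 0 \<or> tilde T le F1 (n - 1) < m"
    proof (cases "n = 0")
      case False
      obtain b where b: "b \<in> T" "lev T le b = n - 1" using all_levels by blast
      have "tilde T le F1 (n - 1) = tilde T le F (n - 1)"
        using F1low[OF b(1)] b(2) False levF[OF sp1 b(1)] levF[OF sp b(1)] by simp
      thus ?thesis using nm by simp
    qed simp
    have ih1: "tilde T le F1 n - m = d" "m \<le> tilde T le F1 n" using t1n mk by auto
    have ex1: "\<exists>G\<in>M. (\<forall>a\<in>Tlt T le n. G a = F1 a) \<and> (\<forall>a\<in>Tlev T le n. G a = pred_at T le (F1 a) m) \<and>
      (\<exists>g\<in>Mn T le M m. \<forall>a\<in>Tle T le n. g (G a) = F1 a)"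
      using Suc.IH[rule_format, OF F12(1) ih1 nm1] .
    obtain G1 where G1: "G1 \<in> M" "\<forall>a\<in>Tlt T le n. G1 a = F1 a"
      "\<forall>a\<in>Tlev T le n. G1 a = pred_at T le (F1 a) m"
      and g1: "\<exists>g\<in>Mn T le M m. \<forall>a\<in>Tle T le n. g (G1 a) = F1 a"
      using ex1 by blast
    obtain g1 where g1: "g1 \<in> Mn T le M m" "\<forall>a\<in>Tle T le n. g1 (G1 a) = F1 a" using g1 by blast
    have spG: "shape_preserving T le S G1" using spM G1(1) .
    have A: "\<forall>a\<in>Tlt T le n. G1 a = F a" using G1(2) F1low by (auto simp: Tlt_def)
    have B: "\<forall>a\<in>Tlev T le n. G1 a = pred_at T le (F a) m"
    proof
      fix a assume a: "a \<in> Tlev T le n"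
      hence aT: "a \<in> T" and la: "lev T le a = n" by (auto simp: Tlev_def)
      have aTle: "a \<in> Tle T le n" using aT la by (simp add: Tle_def)
      let ?y = "F1 a"
      have yT: "?y \<in> T" using sp_into[OF sp1 aT] .
      have ly: "lev T le ?y = k - 1" using F1n[OF aT la] .
      have z: "pred_at T le ?y m \<in> T \<and> le (pred_at T le ?y m) ?y \<and> lev T le (pred_at T le ?y m) = m"
        using pred_at_prop[OF trS yT] ly mk by simp
      have yy: "le ?y (F2 ?y)" using IDp[OF sp2 F2id yT ly] .
      have F2yT: "F2 ?y \<in> T" using sp_into[OF sp2 yT] .
      have "le (pred_at T le ?y m) (F2 ?y)" using tr_trans[OF trS _ yT F2yT] z yy by blast
      hence "pred_at T le (F2 ?y) m = pred_at T le ?y m" using pred_at_eq[OF trS F2yT] z by blast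
      thus "G1 a = pred_at T le (F a) m" using G1(3) a F12(4) aTle by simp
    qed
    define g where "g = (\<lambda>a\<in>T. F2 (g1 a))"
    have g1M: "g1 \<in> M" and g1id: "\<forall>a\<in>Tlt T le m. g1 a = a" using g1(1) by (auto simp: Mn_def)
    have gM: "g \<in> M" unfolding g_def using compM[OF F12(2) g1M] .
    have "\<forall>a\<in>Tlt T le m. g a = a"
    proof
      fix a assume a: "a \<in> Tlt T le m"
      hence "a \<in> Tlt T le (k - 1)" "a \<in> T" using mk by (auto simp: Tlt_def)
      thus "g a = a" using g1id a F2id by (simp add: g_def)
    qed
    hence gMn: "g \<in> Mn T le M m" using gM by (simp add: Mn_def)
    have C: "\<forall>a\<in>Tle T le n. g (G1 a) = F a"
    proof
      fix a assume a: "a \<in> Tle T le n"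
      hence "G1 a \<in> T" using sp_into[OF spG] by (simp add: Tle_def)
      thus "g (G1 a) = F a" using g1(2) a F12(4) by (simp add: g_def)
    qed
    show "\<exists>G\<in>M. (\<forall>a\<in>Tlt T le n. G a = F a) \<and> (\<forall>a\<in>Tlev T le n. G a = pred_at T le (F a) m) \<and>
      (\<exists>g\<in>Mn T le M m. \<forall>a\<in>Tle T le n. g (G a) = F a)"
      using G1(1) A B gMn C by blast
  qed
qed

end

theorem mainTheorem7:
  fixes T :: "'a set" and le :: "'a \<Rightarrow> 'a \<Rightarrow> bool" and \<Sigma> :: "'c set"
    and S :: "'a \<Rightarrow> 'a list \<Rightarrow> 'c \<Rightarrow> 'a option" and M :: "('a \<Rightarrow> 'a) set"
    and n m :: nat and f :: "'a \<Rightarrow> 'a"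
  assumes SM: "is_SM_tree T le \<Sigma> S M"
    and f_AM: "f \<in> AM T le M"
    and f_dom: "f \<in> AM_on M (Tle T le n)"
    and m_range: "(n = 0 \<and> m \<le> tilde T le f 0) \<or>
                  (n > 0 \<and> tilde T le f (n - 1) < m \<and> m \<le> tilde T le f n)"
  shows "cut_at T le n f m \<in> AM T le M \<and>
         (\<exists>g \<in> AMnk T le M m 1. \<forall>a \<in> Tle T le n. g (cut_at T le n f m a) = f a)"
proof -
  obtain F where F: "F \<in> M" "f = restrict F (Tle T le n)" using f_dom by (auto simp: AM_on_def)
  have sp: "shape_preserving T le S F" using spM[OF SM F(1)] .
  have smF: "strict_mono (tilde T le F)" using tmono[OF SM sp] .
  have tf: "tilde T le f i = tilde T le F i" if "i \<le> n" for i
  proof -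
    let ?y = "SOME a. a \<in> T \<and> lev T le a = i"
    have "\<exists>a. a \<in> T \<and> lev T le a = i" using all_levels[OF SM, of i] by blast
    hence y: "?y \<in> T \<and> lev T le ?y = i" by (rule someI_ex)
    hence "f ?y = F ?y" using F(2) that by (simp add: Tle_def)
    thus ?thesis unfolding tilde_def by simp
  qed
  have mr: "m \<le> tilde T le F n" "n = 0 \<or> tilde T le F (n - 1) < m"
    using m_range tf[of 0] tf[of n] tf[of "n - 1"] by auto
  obtain G where G: "G \<in> M" "\<forall>a\<in>Tlt T le n. G a = F a" "\<forall>a\<in>Tlev T le n. G a = pred_at T le (F a) m"
    and gex: "\<exists>g\<in>Mn T le M m. \<forall>a\<in>Tle T le n. g (G a) = F a"
    using main_ind[OF SM, of n m "tilde T le F n - m"] F(1) mr by blast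
  obtain g where g: "g \<in> Mn T le M m" "\<forall>a\<in>Tle T le n. g (G a) = F a" using gex by blast
  have TT: "Tle T le n = Tlt T le (Suc n)" by (auto simp: Tle_def Tlt_def)
  have cutG: "cut_at T le n f m a = G a" if a: "a \<in> Tle T le n" for a
  proof (cases "lev T le a = n")
    case True
    hence "a \<in> Tlev T le n" using a by (simp add: Tle_def Tlev_def)
    thus ?thesis using G(3) a True F(2) by (simp add: cut_at_def)
  next
    case False
    hence "a \<in> Tlt T le n" using a by (simp add: Tle_def Tlt_def)
    thus ?thesis using G(2) a False F(2) by (simp add: cut_at_def)
  qed
  have "cut_at T le n f m = restrict G (Tlt T le (Suc n))"
  proof
    fix a show "cut_at T le n f m a = restrict G (Tlt T le (Suc n)) a"
      using cutG TT by (cases "a \<in> Tle T le n") (auto simp: cut_at_def)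
  qed
  hence c1: "cut_at T le n f m \<in> AM T le M" using G(1) unfolding AM_def by blast
  define g' where "g' = restrict g (Tlt T le (m + 1))"
  have g'A: "g' \<in> AMnk T le M m 1" using g(1) unfolding g'_def AMnk_def by blast
  have "\<forall>a \<in> Tle T le n. g' (cut_at T le n f m a) = f a"
  proof
    fix a assume a: "a \<in> Tle T le n"
    have aT: "a \<in> T" using a by (simp add: Tle_def)
    have GT: "G a \<in> T" using sp_into[OF spM[OF SM G(1)] aT] .
    have FT: "F a \<in> T" using sp_into[OF sp aT] .
    have lG: "lev T le (G a) \<le> m"
    proof (cases "lev T le a = n")
      case True
      hence "a \<in> Tlev T le n" using aT by (simp add: Tlev_def)
      hence "G a = pred_at T le (F a) m" using G(3) by simp
      moreover have "m \<le> lev T le (F a)" using levF[OF SM sp aT] True mr by simp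
      ultimately show ?thesis using pred_at_prop[OF trS[OF SM] FT] by simp
    next
      case False
      hence lt: "lev T le a < n" using a by (simp add: Tle_def)
      hence "a \<in> Tlt T le n" using aT by (simp add: Tlt_def)
      hence "G a = F a" using G(2) by simp
      moreover have "tilde T le F (lev T le a) \<le> tilde T le F (n - 1)"
        using smF lt by (simp add: strict_mono_less_eq)
      ultimately show ?thesis using levF[OF SM sp aT] mr lt by simp
    qed
    have "g' (G a) = g (G a)" using GT lG by (simp add: g'_def Tlt_def)
    thus "g' (cut_at T le n f m a) = f a" using cutG[OF a] g(2) a F(2) by simp
  qed
  thus ?thesis using c1 g'A by blast
qed

end
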